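(* Let $\nu>0$. For every $x\ge0$ and $t>0$, $$P^{(-\nu)}_x(\tau_0>t)=\frac{x^{2\nu}}{(2t)^{\nu}\Gamma(\nu+1)}\exp\Big(-\frac{x^2}{2t}\Big)+P^{(-\nu-1)}_x(\tau_0>t).$$
   Context: For $\mu\in\mathbb{R}$ and $x\ge0$, $P^{(\mu)}_x$ denotes the law on $\Omega=C([0,\infty);\mathbb{R})$ of the Bessel process with index $\mu$ (dimension $2(\mu+1)$) started at $x$; $R$ is the coordinate process on $\Omega$, and $\tau_0=\inf\{t\ge0:R_t=0\}$. $\Gamma$ is the gamma function. *)

theory Defs
  imports "HOL-Probability.Probability"
begin

text \<open>Path space Omega = C([0,oo); R), realised as functions real => real that are
  continuous on [0,oo) and normalised to 0 at negative times, with the sigma-algebra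
  generated by the coordinate maps.\<close>

definition cont_paths :: "(real \<Rightarrow> real) set" where
  "cont_paths = {\<omega>. continuous_on {0..} \<omega> \<and> (\<forall>s<0. \<omega> s = 0)}"

definition path_space :: "(real \<Rightarrow> real) measure" where
  "path_space = restrict_space (Pi\<^sub>M UNIV (\<lambda>_. borel)) cont_paths"

text \<open>First hitting time of 0 (value oo if 0 is never hit).\<close>

definition tau0 :: "(real \<Rightarrow> real) \<Rightarrow> ereal" where
  "tau0 \<omega> = Inf {ereal s | s. 0 \<le> s \<and> \<omega> s = 0}"

definition besselI :: "real \<Rightarrow> real \<Rightarrow> real" where
  "besselI a z = (\<Sum>k. (z / 2) powr (2 * real k + a) / (fact k * Gamma (real k + a + 1)))"

text \<open>Transition density of the Bessel process of index mu killed at its first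
  hitting time of 0 (for mu >= 0 this is the ordinary Bessel transition density):
  q_t(x,y) = (y/t) (y/x)^mu exp(-(x^2+y^2)/(2t)) I_{|mu|}(xy/t),  x, y > 0.\<close>

definition bessel_kdens :: "real \<Rightarrow> real \<Rightarrow> real \<Rightarrow> real \<Rightarrow> real" where
  "bessel_kdens \<mu> t x y =
     (y / t) * (y / x) powr \<mu> * exp (- (x\<^sup>2 + y\<^sup>2) / (2 * t)) * besselI \<bar>\<mu>\<bar> (x * y / t)"

text \<open>Finite-dimensional distributions of the killed process:
  kfdd mu s y [(t1,A1),...,(tn,An)] = P_y-at-time-s(R_{t_i} in A_i for all i, t_n < tau_0).\<close>

fun bessel_kfdd :: "real \<Rightarrow> real \<Rightarrow> real \<Rightarrow> (real \<times> real set) list \<Rightarrow> ennreal" where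
  "bessel_kfdd \<mu> s y [] = 1"
| "bessel_kfdd \<mu> s y ((t, A) # rest) =
     (\<integral>\<^sup>+ z. indicator (A \<inter> {0<..}) z * ennreal (bessel_kdens \<mu> (t - s) y z)
              * bessel_kfdd \<mu> t z rest \<partial>lborel)"

text \<open>P is (a version of) the law P^(mu)_x of the Bessel process of index mu started at x:
  a probability measure on path space, starting at x, whose law before tau_0 has the
  Bessel transition densities.\<close>

definition bessel_law :: "real \<Rightarrow> real \<Rightarrow> (real \<Rightarrow> real) measure \<Rightarrow> bool" where
  "bessel_law \<mu> x P \<longleftrightarrow>
     prob_space P \<and> sets P = sets path_space \<and> space P = space path_space \<and>
     (AE \<omega> in P. \<omega> 0 = x) \<and>
     (\<forall>tas. tas \<noteq> [] \<longrightarrow> sorted_wrt (<) (map fst tas) \<longrightarrow> 0 < fst (hd tas) \<longrightarrow>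
        (\<forall>(s, A) \<in> set tas. A \<in> sets borel) \<longrightarrow>
        emeasure P {\<omega> \<in> space P. (\<forall>(s, A) \<in> set tas. \<omega> s \<in> A) \<and>
                                  ereal (fst (last tas)) < tau0 \<omega>}
          = bessel_kfdd \<mu> 0 x tas)"

end

theory Submission
  imports Defs
begin

lemma gauss_odd_std:
  "(\<integral>\<^sup>+x. ennreal (indicator {0<..} x * (exp (-x\<^sup>2) * x^(2*k+1))) \<partial>lborel) = ennreal (fact k / 2)"
proof -
  have h: "has_bochner_integral lborel (\<lambda>x::real. indicator {0..} x *\<^sub>R (exp (-x\<^sup>2)*x^(2 * k + 1))) (fact k / 2)"
    by (rule gaussian_moment_odd_pos)
  have e: "(\<lambda>x::real. indicator {0..} x *\<^sub>R (exp (-x\<^sup>2)*x^(2 * k + 1))) = (\<lambda>x. indicator {0<..} x * (exp (-x\<^sup>2) * x^(2*k+1)))"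
    by (auto simp: indicator_def fun_eq_iff)
  show ?thesis
    using h unfolding e
    by (subst nn_integral_eq_integrable) (auto simp: has_bochner_integral_iff indicator_def)
qed

lemma gauss_odd:
  fixes s :: real assumes s: "s > 0"
  shows "(\<integral>\<^sup>+y. ennreal (indicator {0<..} y * (y^(2*k+1) * exp (-y\<^sup>2 / s))) \<partial>lborel)
     = ennreal (s^(k+1) * fact k / 2)"
proof -
  let ?c = "sqrt s"
  have c: "?c > 0" using s by simp
  have cc: "?c * ?c = s" using s by simp
  have "(\<integral>\<^sup>+y. ennreal (indicator {0<..} y * (y^(2*k+1) * exp (-y\<^sup>2 / s))) \<partial>lborel)
     = \<bar>?c\<bar> * (\<integral>\<^sup>+x. ennreal (indicator {0<..} (0 + ?c * x) * ((0 + ?c * x)^(2*k+1) * exp (-(0 + ?c * x)\<^sup>2 / s))) \<partial>lborel)"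
    by (rule nn_integral_real_affine) (use c in auto)
  also have "(\<lambda>x. ennreal (indicator {0<..} (0 + ?c * x) * ((0 + ?c * x)^(2*k+1) * exp (-(0 + ?c * x)\<^sup>2 / s))))
     = (\<lambda>x. ennreal (s^k * ?c) * ennreal (indicator {0<..} x * (exp (-x\<^sup>2) * x^(2*k+1))))"
  proof
    fix x
    have p: "(0 + ?c * x)^(2*k+1) = s^k * ?c * x^(2*k+1)"
      using cc by (simp add: power_mult_distrib power_add power_mult flip: power2_eq_square)
    have q0: "(0 + ?c * x)\<^sup>2 = s * x\<^sup>2" using s by (simp add: power_mult_distrib)
    have q: "- (0 + ?c * x)\<^sup>2 / s = - x\<^sup>2" unfolding q0 using s by simp
    show "ennreal (indicator {0<..} (0 + ?c * x) * ((0 + ?c * x)^(2*k+1) * exp (-(0 + ?c * x)\<^sup>2 / s)))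
     = ennreal (s^k * ?c) * ennreal (indicator {0<..} x * (exp (-x\<^sup>2) * x^(2*k+1)))"
      unfolding p q
      using c s by (auto simp: indicator_def zero_less_mult_iff ennreal_mult'[symmetric] mult_ac)
  qed
  also have "\<bar>?c\<bar> * (\<integral>\<^sup>+x. ennreal (s^k * ?c) * ennreal (indicator {0<..} x * (exp (-x\<^sup>2) * x^(2*k+1))) \<partial>lborel)
     = ennreal ?c * (ennreal (s^k * ?c) * ennreal (fact k / 2))"
    using c by (subst nn_integral_cmult, measurable) (simp only: gauss_odd_std abs_of_pos)
  also have "\<dots> = ennreal (s^(k+1) * fact k / 2)"
    using c s cc by (simp add: ennreal_mult'[symmetric] mult_ac)
  finally show ?thesis .
qed



lemma Gamma_mono_nat:
  fixes b :: real assumes b: "b > 0"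
  shows "Gamma (b + 1) \<le> Gamma (real k + b + 1)"
proof -
  have nz: "b + 1 \<notin> \<int>\<^sub>\<le>\<^sub>0" using b nonpos_Ints_nonpos[of "b+1"] by force
  have pg: "pochhammer (b+1) k \<ge> (1::real)"
  proof (induction k)
    case (Suc k)
    have "(1::real) * 1 \<le> pochhammer (b+1) k * (b + 1 + real k)"
      by (rule mult_mono) (use Suc b in auto)
    then show ?case by (simp add: pochhammer_Suc)
  qed simp
  have gp: "Gamma (b + 1) > 0" using b by (intro Gamma_real_pos) simp
  have e: "Gamma (b + 1 + real k) = pochhammer (b+1) k * Gamma (b + 1)"
    using pochhammer_Gamma[OF nz, of k] gp by simp
  have "Gamma (b + 1) = 1 * Gamma (b + 1)" by simp
  also have "\<dots> \<le> pochhammer (b+1) k * Gamma (b + 1)"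
    by (rule mult_right_mono) (use pg gp in auto)
  also have "\<dots> = Gamma (real k + b + 1)" using e by (simp add: add_ac)
  finally show ?thesis .
qed

lemma Gamma_pos_shift: "(b::real) > 0 \<Longrightarrow> Gamma (real k + b + 1) > 0"
  by (intro Gamma_real_pos) simp

lemma bessel_summable:
  fixes b w :: real assumes b: "b > 0" and w: "w \<ge> 0"
  shows "summable (\<lambda>k. w powr (2 * real k + b) / (fact k * Gamma (real k + b + 1)))"
proof (rule summable_comparison_test)
  let ?g = "\<lambda>k. (w powr b / Gamma (b + 1)) * (inverse (fact k) * (w\<^sup>2)^k)"
  show "summable ?g" by (intro summable_mult summable_exp)
  have gp: "Gamma (b + 1) > 0" using b by (intro Gamma_real_pos) simp
  show "\<exists>N. \<forall>n\<ge>N. norm (w powr (2 * real n + b) / (fact n * Gamma (real n + b + 1))) \<le> ?g n"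
  proof (intro exI allI impI)
    fix n :: nat
    have e: "w powr (2 * real n + b) = w powr b * (w\<^sup>2)^n"
    proof (cases "w = 0")
      case True then show ?thesis using b by simp
    next
      case False
      then have "w powr (2 * real n + b) = w powr b * w powr (2 * real n)"
        by (simp add: powr_add)
      also have "w powr (2 * real n) = (w\<^sup>2)^n" using False w
        by (metis of_nat_numeral of_nat_mult powr_realpow power_mult order_le_neq_trans)
      finally show ?thesis .
    qed
    have g1: "Gamma (b + 1) \<le> Gamma (real n + b + 1)" by (rule Gamma_mono_nat[OF b])
    have g2: "Gamma (real n + b + 1) > 0" by (rule Gamma_pos_shift[OF b])
    have nn: "0 \<le> w powr b * (w\<^sup>2)^n / fact n" using w by simp
    have "norm (w powr (2 * real n + b) / (fact n * Gamma (real n + b + 1)))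
        = (w powr b * (w\<^sup>2)^n / fact n) / Gamma (real n + b + 1)"
      unfolding e using w g2 by (simp add: field_simps)
    also have "\<dots> \<le> (w powr b * (w\<^sup>2)^n / fact n) / Gamma (b + 1)"
      using nn g1 gp by (intro divide_left_mono) auto
    also have "\<dots> = ?g n" by (simp add: field_simps)
    finally show "norm (w powr (2 * real n + b) / (fact n * Gamma (real n + b + 1))) \<le> ?g n" .
  qed
qed


definition Ck :: "real \<Rightarrow> real \<Rightarrow> real \<Rightarrow> nat \<Rightarrow> real" where
  "Ck b t x k = x powr (2 * real k + 2 * b) * exp (- x\<^sup>2 / (2 * t)) /
      (t * (2 * t) powr (2 * real k + b) * fact k * Gamma (real k + b + 1))"

lemma kdens_term:
  fixes b t x z :: real assumes b: "b > 0" and t: "t > 0" and x: "x > 0" and z: "z > 0"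
  shows "(z / t) * (z / x) powr (- b) * exp (- (x\<^sup>2 + z\<^sup>2) / (2 * t)) *
           ((x * z / t / 2) powr (2 * real k + b) / (fact k * Gamma (real k + b + 1)))
       = Ck b t x k * (z ^ (2 * k + 1) * exp (- z\<^sup>2 / (2 * t)))"
proof -
  have e1: "(x * z / t / 2) powr (2 * real k + b) = x powr (2 * real k + b) * z powr (2 * real k + b) / (2 * t) powr (2 * real k + b)"
    using x z t by (simp add: powr_mult powr_divide mult.commute[of t] divide_divide_eq_left)
  have e2: "(z / x) powr (- b) = x powr b / z powr b"
    using x z by (simp add: powr_divide powr_minus_divide)
  have e3: "exp (- (x\<^sup>2 + z\<^sup>2) / (2 * t)) = exp (- x\<^sup>2 / (2 * t)) * exp (- z\<^sup>2 / (2 * t))"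
    by (simp add: exp_add[symmetric] diff_divide_distrib)
  have e4: "z * z powr (2 * real k + b) / z powr b = z ^ (2 * k + 1)"
  proof -
    have "z powr (2 * real k + b) = z powr (2 * real k) * z powr b" by (simp add: powr_add)
    moreover have "z powr (2 * real k) = z ^ (2 * k)" using z
      by (metis of_nat_numeral of_nat_mult powr_realpow)
    ultimately show ?thesis using z by simp
  qed
  have e5: "x powr b * x powr (2 * real k + b) = x powr (2 * real k + 2 * b)"
    by (simp add: powr_add[symmetric] algebra_simps)
  have "(z / t) * (z / x) powr (- b) * exp (- (x\<^sup>2 + z\<^sup>2) / (2 * t)) *
           ((x * z / t / 2) powr (2 * real k + b) / (fact k * Gamma (real k + b + 1)))
     = (x powr b * x powr (2 * real k + b)) * (z * z powr (2 * real k + b) / z powr b)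
        * exp (- x\<^sup>2 / (2 * t)) * exp (- z\<^sup>2 / (2 * t)) /
        (t * (2 * t) powr (2 * real k + b) * fact k * Gamma (real k + b + 1))"
    unfolding e1 e2 e3 by (simp add: field_simps)
  also have "\<dots> = Ck b t x k * (z ^ (2 * k + 1) * exp (- z\<^sup>2 / (2 * t)))"
    unfolding e4 e5 Ck_def by (simp add: field_simps)
  finally show ?thesis .
qed

lemma kdens_series:
  fixes b t x z :: real assumes b: "b > 0" and t: "t > 0" and x: "x > 0" and z: "z > 0"
  shows "ennreal (bessel_kdens (- b) t x z) = (\<Sum>k. ennreal (Ck b t x k * (z ^ (2 * k + 1) * exp (- z\<^sup>2 / (2 * t)))))"
proof -
  let ?A = "(z / t) * (z / x) powr (- b) * exp (- (x\<^sup>2 + z\<^sup>2) / (2 * t))"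
  let ?T = "\<lambda>k. (x * z / t / 2) powr (2 * real k + b) / (fact k * Gamma (real k + b + 1))"
  have sT: "summable ?T" using x z t b by (intro bessel_summable) auto
  have "bessel_kdens (- b) t x z = ?A * suminf ?T"
    unfolding bessel_kdens_def besselI_def using b by simp
  also have "\<dots> = (\<Sum>k. ?A * ?T k)" by (rule suminf_mult[OF sT, symmetric])
  finally have 1: "bessel_kdens (- b) t x z = (\<Sum>k. ?A * ?T k)" .
  have nn: "\<And>k. 0 \<le> ?A * ?T k"
    using x z t b Gamma_pos_shift[OF b] by (intro mult_nonneg_nonneg divide_nonneg_pos) auto
  have "ennreal (\<Sum>k. ?A * ?T k) = (\<Sum>k. ennreal (?A * ?T k))"
    by (rule suminf_ennreal2[symmetric]) (use nn summable_mult[OF sT, of ?A] in blast)+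
  then show ?thesis unfolding 1 kdens_term[OF b t x z] .
qed

lemma kdens_integral:
  fixes b t x :: real assumes b: "b > 0" and t: "t > 0" and x: "x > 0"
  shows "(\<integral>\<^sup>+ z. indicator {0<..} z * ennreal (bessel_kdens (- b) t x z) \<partial>lborel)
     = (\<Sum>k. ennreal (exp (- x\<^sup>2 / (2 * t)) * x powr (2 * real k + 2 * b) / ((2 * t) powr (real k + b) * Gamma (real k + b + 1))))"
proof -
  have "(\<integral>\<^sup>+ z. indicator {0<..} z * ennreal (bessel_kdens (- b) t x z) \<partial>lborel)
      = (\<integral>\<^sup>+ z. (\<Sum>k. ennreal (Ck b t x k) * ennreal (indicator {0<..} z * (z ^ (2 * k + 1) * exp (- z\<^sup>2 / (2 * t))))) \<partial>lborel)"
  proof (intro nn_integral_cong)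
    fix z :: real
    show "indicator {0<..} z * ennreal (bessel_kdens (- b) t x z)
       = (\<Sum>k. ennreal (Ck b t x k) * ennreal (indicator {0<..} z * (z ^ (2 * k + 1) * exp (- z\<^sup>2 / (2 * t)))))"
    proof (cases "z > 0")
      case True
      have ck: "\<And>k. Ck b t x k \<ge> 0" unfolding Ck_def using x t Gamma_pos_shift[OF b]
        by (intro divide_nonneg_pos mult_pos_pos) auto
      show ?thesis using True ck
        by (simp add: kdens_series[OF b t x True] ennreal_mult'[symmetric] mult_ac)
    qed simp
  qed
  also have "\<dots> = (\<Sum>k. \<integral>\<^sup>+ z. ennreal (Ck b t x k) * ennreal (indicator {0<..} z * (z ^ (2 * k + 1) * exp (- z\<^sup>2 / (2 * t)))) \<partial>lborel)"
    by (rule nn_integral_suminf) measurable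
  also have "\<dots> = (\<Sum>k. ennreal (Ck b t x k) * ennreal ((2 * t)^(k+1) * fact k / 2))"
  proof (intro suminf_cong)
    fix k
    show "(\<integral>\<^sup>+ z. ennreal (Ck b t x k) * ennreal (indicator {0<..} z * (z ^ (2 * k + 1) * exp (- z\<^sup>2 / (2 * t)))) \<partial>lborel)
        = ennreal (Ck b t x k) * ennreal ((2 * t)^(k+1) * fact k / 2)"
      by (subst nn_integral_cmult, measurable) (simp only: gauss_odd[of "2*t" k] t mult_pos_pos zero_less_numeral)
  qed
  also have "\<dots> = (\<Sum>k. ennreal (exp (- x\<^sup>2 / (2 * t)) * x powr (2 * real k + 2 * b) / ((2 * t) powr (real k + b) * Gamma (real k + b + 1))))"
  proof (intro suminf_cong)
    fix k
    have ck: "Ck b t x k \<ge> 0" unfolding Ck_def using x t Gamma_pos_shift[OF b]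
      by (intro divide_nonneg_pos mult_pos_pos) auto
    have tp: "(2 * t) powr (2 * real k + b) = (2*t)^k * (2 * t) powr (real k + b)"
    proof -
      have "(2 * t) powr (2 * real k + b) = (2 * t) powr (real k) * (2 * t) powr (real k + b)"
        by (simp add: powr_add[symmetric] algebra_simps)
      also have "(2 * t) powr (real k) = (2*t)^k" using t by (simp add: powr_realpow)
      finally show ?thesis .
    qed
    have "Ck b t x k * ((2 * t)^(k+1) * fact k / 2) = exp (- x\<^sup>2 / (2 * t)) * x powr (2 * real k + 2 * b) / ((2 * t) powr (real k + b) * Gamma (real k + b + 1))"
      unfolding Ck_def tp using t Gamma_pos_shift[OF b, of k] by (simp add: field_simps)
    then show "ennreal (Ck b t x k) * ennreal ((2 * t)^(k+1) * fact k / 2) = ennreal (exp (- x\<^sup>2 / (2 * t)) * x powr (2 * real k + 2 * b) / ((2 * t) powr (real k + b) * Gamma (real k + b + 1)))"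
      using ck t by (simp add: ennreal_mult'[symmetric])
  qed
  finally show ?thesis .
qed


definition cc :: "real \<Rightarrow> real \<Rightarrow> real \<Rightarrow> nat \<Rightarrow> real" where
  "cc b t x k = exp (- x\<^sup>2 / (2 * t)) * x powr (2 * real k + 2 * b) / ((2 * t) powr (real k + b) * Gamma (real k + b + 1))"

lemma law_tail:
  fixes b x t :: real and P :: "(real \<Rightarrow> real) measure"
  assumes b: "b > 0" and x: "x \<ge> 0" and t: "t > 0" and law: "bessel_law (- b) x P"
  shows "emeasure P {\<omega> \<in> space P. tau0 \<omega> > ereal t} = (if x = 0 then 0 else (\<Sum>k. ennreal (cc b t x k)))"
proof -
  have "emeasure P {\<omega> \<in> space P. (\<forall>(s, A) \<in> set [(t, UNIV::real set)]. \<omega> s \<in> A) \<and> ereal (fst (last [(t, UNIV::real set)])) < tau0 \<omega>}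
      = bessel_kfdd (- b) 0 x [(t, UNIV)]"
    using law t unfolding bessel_law_def by (elim conjE allE[where x="[(t, UNIV)]"] impE) auto
  then have 1: "emeasure P {\<omega> \<in> space P. tau0 \<omega> > ereal t} = bessel_kfdd (- b) 0 x [(t, UNIV)]"
    by simp
  have 2: "bessel_kfdd (- b) 0 x [(t, UNIV)] = (\<integral>\<^sup>+ z. indicator {0<..} z * ennreal (bessel_kdens (- b) t x z) \<partial>lborel)"
    by simp
  show ?thesis
  proof (cases "x = 0")
    case True
    then have "\<And>z. bessel_kdens (- b) t x z = 0" by (simp add: bessel_kdens_def)
    then show ?thesis using True 1 2 by simp
  next
    case False
    then show ?thesis using 1 2 kdens_integral[OF b t] x unfolding cc_def by simp
  qed
qed

lemma cc_shift: "cc b t x (Suc k) = cc (b + 1) t x k"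
  unfolding cc_def by (simp add: algebra_simps)

theorem lemma3p2:
  fixes \<nu> x t :: real and P Q :: "(real \<Rightarrow> real) measure"
  assumes "\<nu> > 0" and "x \<ge> 0" and "t > 0"
    and "bessel_law (- \<nu>) x P" and "bessel_law (- \<nu> - 1) x Q"
  shows "measure P {\<omega> \<in> space P. tau0 \<omega> > ereal t}
       = x powr (2 * \<nu>) / ((2 * t) powr \<nu> * Gamma (\<nu> + 1)) * exp (- (x\<^sup>2) / (2 * t))
         + measure Q {\<omega> \<in> space Q. tau0 \<omega> > ereal t}"
proof -
  have nu: "\<nu> > 0" and x: "x \<ge> 0" and t: "t > 0" using assms by auto
  have lawQ: "bessel_law (- (\<nu> + 1)) x Q" using assms(5) by (simp add: minus_add_distrib)
  have eP: "emeasure P {\<omega> \<in> space P. tau0 \<omega> > ereal t} = (if x = 0 then 0 else (\<Sum>k. ennreal (cc \<nu> t x k)))"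
    by (rule law_tail[OF nu x t assms(4)])
  have eQ: "emeasure Q {\<omega> \<in> space Q. tau0 \<omega> > ereal t} = (if x = 0 then 0 else (\<Sum>k. ennreal (cc (\<nu> + 1) t x k)))"
    by (rule law_tail[OF _ x t lawQ]) (use nu in simp)
  have c0: "cc \<nu> t x 0 = x powr (2 * \<nu>) / ((2 * t) powr \<nu> * Gamma (\<nu> + 1)) * exp (- (x\<^sup>2) / (2 * t))"
    unfolding cc_def by simp
  have c0nn: "cc \<nu> t x 0 \<ge> 0" unfolding cc_def using Gamma_pos_shift[OF nu, of 0] by simp
  have pQ: "prob_space Q" using assms(5) unfolding bessel_law_def by simp
  have fin: "emeasure Q {\<omega> \<in> space Q. tau0 \<omega> > ereal t} < top"
    using prob_space.emeasure_le_1[OF pQ] by (metis ennreal_one_less_top order_le_less_trans)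
  have split: "emeasure P {\<omega> \<in> space P. tau0 \<omega> > ereal t} = ennreal (if x = 0 then 0 else cc \<nu> t x 0) + emeasure Q {\<omega> \<in> space Q. tau0 \<omega> > ereal t}"
  proof (cases "x = 0")
    case True then show ?thesis using eP eQ by simp
  next
    case False
    have "(\<Sum>k. ennreal (cc \<nu> t x k)) = (\<Sum>k. ennreal (cc \<nu> t x (k + 1))) + (\<Sum>k<1. ennreal (cc \<nu> t x k))"
      by (rule suminf_offset) (rule summableI)
    also have "\<dots> = ennreal (cc \<nu> t x 0) + (\<Sum>k. ennreal (cc (\<nu> + 1) t x k))"
      by (simp add: cc_shift add.commute)
    finally show ?thesis using eP eQ False by simp
  qed
  have "measure P {\<omega> \<in> space P. tau0 \<omega> > ereal t} = enn2real (emeasure P {\<omega> \<in> space P. tau0 \<omega> > ereal t})"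
    by (simp add: measure_def)
  also have "\<dots> = (if x = 0 then 0 else cc \<nu> t x 0) + measure Q {\<omega> \<in> space Q. tau0 \<omega> > ereal t}"
    unfolding split using fin c0nn by (subst enn2real_plus) (auto simp: measure_def)
  also have "\<dots> = x powr (2 * \<nu>) / ((2 * t) powr \<nu> * Gamma (\<nu> + 1)) * exp (- (x\<^sup>2) / (2 * t))
         + measure Q {\<omega> \<in> space Q. tau0 \<omega> > ereal t}"
    using c0 nu by auto
  finally show ?thesis .
qed

end
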